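(* Let $\mathcal{G}$ be an undirected graph on $n$ nodes with symmetric nonnegative adjacency matrix $A=(a_{ij})\in\mathbb{R}^{n\times n}$ and degree matrix $D=\mathrm{diag}(d_1,\dots,d_n)$. Let $L_s=I-D^{-1/2}AD^{-1/2}$ be the symmetrically normalized graph Laplacian, with eigendecomposition $L_s=U\Lambda U^{-1}$, where $\Lambda=\mathrm{diag}(\lambda_1,\dots,\lambda_n)$ and $U=[\bm u_1,\dots,\bm u_n]$ is orthogonal. Let $p$ be a real function and $G=U\,\mathrm{diag}(p(\lambda_1),\dots,p(\lambda_n))\,U^{-1}$. If $p$ is nonincreasing and nonnegative on the set of eigenvalues $\{\lambda_1,\dots,\lambda_n\}$, then for any signal $\bm f\in\mathbb{R}^n$ with filtered signal $\bar{\bm f}=G\bm f$ (both nonzero), we have $$\Omega\!\left(\frac{\bar{\bm f}}{\|\bar{\bm f}\|_2}\right)\le \Omega\!\left(\frac{\bm f}{\|\bm f\|_2}\right),$$ where for $\bm g\in\mathbb{R}^n$, $\Omega(\bm g)=\frac12\sum_{(v_i,v_j)\in\mathcal{E}} a_{ij}\left\|\frac{\bm g(i)}{\sqrt{d_i}}-\frac{\bm g(j)}{\sqrt{d_j}}\right\|_2^2=\bm g^\top L_s\bm g$.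
   Context: A graph signal is a vector $\bm f\in\mathbb{R}^n$ assigning a real value to each node. A graph filter with frequency response function $p$ is the matrix $G=Up(\Lambda)U^{-1}$. $\Omega$ is the smoothness measure (Laplacian–Beltrami operator) given in the claim; $\mathcal{E}$ is the edge set. The eigenvalues of $L_s$ lie in $[0,2]$. *)

theory Defs
  imports "HOL-Analysis.Analysis"
begin

definition degree :: "real^'n^'n \<Rightarrow> 'n::finite \<Rightarrow> real" where
  "degree A i = (\<Sum>j\<in>UNIV. A $ i $ j)"

definition diag_mat :: "('n::finite \<Rightarrow> real) \<Rightarrow> real^'n^'n" where
  "diag_mat d = (\<chi> i j. if i = j then d i else 0)"

definition sym_laplacian :: "real^'n^'n \<Rightarrow> real^'n::finite^'n" where
  "sym_laplacian A =
     mat 1 - diag_mat (\<lambda>i. 1 / sqrt (degree A i)) ** A ** diag_mat (\<lambda>i. 1 / sqrt (degree A i))"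

definition edges :: "real^'n^'n \<Rightarrow> ('n::finite \<times> 'n) set" where
  "edges A = {(i, j). A $ i $ j \<noteq> 0}"

definition Omega :: "real^'n^'n \<Rightarrow> real^'n::finite \<Rightarrow> real" where
  "Omega A g = (1/2) * (\<Sum>(i, j)\<in>edges A.
      A $ i $ j * (g $ i / sqrt (degree A i) - g $ j / sqrt (degree A j))^2)"

end

theory Submission
  imports Defs
begin

lemma diag_mul_entry:
  fixes a b :: "'n::finite \<Rightarrow> real" and A :: "real^'n^'n"
  shows "(diag_mat a ** A ** diag_mat b) $ i $ j = a i * A $ i $ j * b j"
proof -
  have h: "\<And>P x y. (if P then x else (0::real)) * y = (if P then x * y else 0)" by simp
  have h2: "\<And>P x y. x * (if P then y else (0::real)) = (if P then x * y else 0)" by simp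
  show ?thesis by (simp add: diag_mat_def matrix_matrix_mult_def h h2)
qed

lemma lap_entry:
  "sym_laplacian A $ i $ j = (if i = j then 1 else 0)
     - (1 / sqrt (degree A i)) * A $ i $ j * (1 / sqrt (degree A j))"
  unfolding sym_laplacian_def by (simp add: diag_mul_entry mat_def)

lemma orth_inv:
  fixes U :: "real^'n::finite^'n"
  assumes "orthogonal_matrix U"
  shows "matrix_inv U = transpose U"
proof -
  have ex: "\<exists>A'. U ** A' = mat 1 \<and> A' ** U = mat 1"
    using assms orthogonal_matrix_def by blast
  define M where "M = matrix_inv U"
  have M: "U ** M = mat 1 \<and> M ** U = mat 1"
    unfolding M_def matrix_inv_def by (rule someI_ex[OF ex])
  have "M = M ** (U ** transpose U)" using assms by (simp add: orthogonal_matrix_def)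
  also have "\<dots> = (M ** U) ** transpose U" by (simp add: matrix_mul_assoc)
  also have "\<dots> = transpose U" using M by simp
  finally show ?thesis by (simp add: M_def)
qed

lemma orth_inner:
  fixes U :: "real^'n::finite^'n"
  assumes "orthogonal_matrix U"
  shows "(U *v x) \<bullet> (U *v y) = x \<bullet> y"
proof -
  have "(U *v x) \<bullet> (U *v y) = ((U *v x) v* U) \<bullet> y" by (simp add: dot_lmul_matrix)
  also have "(U *v x) v* U = transpose U *v (U *v x)"
    by (metis transpose_transpose vector_transpose_matrix)
  also have "\<dots> = x" using assms
    by (simp add: matrix_vector_mul_assoc orthogonal_matrix_def)
  finally show ?thesis .
qed

lemma conj_mv:
  fixes U M :: "real^'n::finite^'n"
  assumes "orthogonal_matrix U"
  shows "(U ** M ** transpose U) *v (U *v y) = U *v (M *v y)"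
proof -
  have UtU: "transpose U ** U = mat 1" using assms by (simp add: orthogonal_matrix_def)
  have "(U ** M ** transpose U) *v (U *v y) = (U ** M ** (transpose U ** U)) *v y"
    by (simp only: matrix_vector_mul_assoc matrix_mul_assoc)
  also have "\<dots> = U *v (M *v y)"
    by (simp only: UtU matrix_mul_rid matrix_vector_mul_assoc)
  finally show ?thesis .
qed

lemma diag_quad:
  fixes y :: "real^'n::finite"
  shows "y \<bullet> (diag_mat l *v y) = (\<Sum>k\<in>UNIV. l k * (y $ k)^2)"
proof -
  have h: "\<And>P x y. (if P then x else (0::real)) * y = (if P then x * y else 0)" by simp
  have h2: "\<And>P x y. x * (if P then y else (0::real)) = (if P then x * y else 0)" by simp
  show ?thesis by (simp add: inner_vec_def diag_mat_def matrix_vector_mult_def h h2 power2_eq_square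
      mult.commute mult.left_commute)
qed

lemma omega_quad:
  fixes A :: "real^'n::finite^'n"
  assumes sym: "transpose A = A" and deg_pos: "\<And>i. degree A i > 0"
  shows "Omega A g = g \<bullet> (sym_laplacian A *v g)"
proof -
  define x where "x i = g $ i / sqrt (degree A i)" for i
  have Aij: "A $ j $ i = A $ i $ j" for i j
    using sym by (metis transpose_def vec_lambda_beta)
  have "Omega A g = (1/2) * (\<Sum>(i, j)\<in>UNIV. A $ i $ j * (x i - x j)^2)"
    unfolding Omega_def x_def
    by (rule arg_cong[where f="\<lambda>t. (1/2) * t"], rule sum.mono_neutral_left)
       (auto simp: edges_def)
  also have "(\<Sum>(i, j)\<in>UNIV. A $ i $ j * (x i - x j)^2)
      = (\<Sum>i\<in>UNIV. \<Sum>j\<in>UNIV. A $ i $ j * (x i - x j)^2)"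
    by (simp add: UNIV_Times_UNIV[symmetric] sum.cartesian_product del: UNIV_Times_UNIV)
  also have "\<dots> = (\<Sum>i\<in>UNIV. \<Sum>j\<in>UNIV. A $ i $ j * (x i)^2)
      + (\<Sum>i\<in>UNIV. \<Sum>j\<in>UNIV. A $ i $ j * (x j)^2)
      - 2 * (\<Sum>i\<in>UNIV. \<Sum>j\<in>UNIV. A $ i $ j * x i * x j)"
    by (simp add: power2_diff algebra_simps sum.distrib sum_subtractf sum_distrib_left)
  also have "(\<Sum>i\<in>UNIV. \<Sum>j\<in>UNIV. A $ i $ j * (x j)^2)
      = (\<Sum>i\<in>UNIV. \<Sum>j\<in>UNIV. A $ i $ j * (x i)^2)"
    by (subst sum.swap) (simp add: Aij)
  also have "(\<Sum>i\<in>UNIV. \<Sum>j\<in>UNIV. A $ i $ j * (x i)^2) = (\<Sum>i\<in>UNIV. (g $ i)^2)"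
  proof (rule sum.cong[OF refl])
    fix i :: 'n
    have d: "degree A i > 0" by (rule deg_pos)
    have "(\<Sum>j\<in>UNIV. A $ i $ j * (x i)^2) = degree A i * (x i)^2"
      by (simp add: degree_def sum_distrib_right)
    also have "\<dots> = (g $ i)^2" using d
      by (simp add: x_def power_divide)
    finally show "(\<Sum>j\<in>UNIV. A $ i $ j * (x i)^2) = (g $ i)^2" .
  qed
  finally have L: "Omega A g = (\<Sum>i\<in>UNIV. (g $ i)^2)
      - (\<Sum>i\<in>UNIV. \<Sum>j\<in>UNIV. A $ i $ j * x i * x j)" by simp
  have "g \<bullet> (sym_laplacian A *v g) = (\<Sum>i\<in>UNIV. \<Sum>j\<in>UNIV. g $ i *
      ((if i = j then 1 else 0) - (1 / sqrt (degree A i)) * A $ i $ j * (1 / sqrt (degree A j))) * g $ j)"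
    by (simp add: inner_vec_def matrix_vector_mult_def lap_entry sum_distrib_left mult.assoc)
  also have "\<dots> = (\<Sum>i\<in>UNIV. \<Sum>j\<in>UNIV. (if i = j then g $ i * g $ j else 0)
      - A $ i $ j * x i * x j)"
    by (rule sum.cong[OF refl], rule sum.cong[OF refl]) (auto simp: x_def algebra_simps)
  also have "\<dots> = (\<Sum>i\<in>UNIV. (g $ i)^2)
      - (\<Sum>i\<in>UNIV. \<Sum>j\<in>UNIV. A $ i $ j * x i * x j)"
    by (simp add: sum_subtractf power2_eq_square)
  finally show ?thesis using L by simp
qed

lemma cheb:
  fixes S :: "'k set" and l q w :: "'k \<Rightarrow> real"
  assumes "finite S" and "\<And>k. k \<in> S \<Longrightarrow> w k \<ge> 0"
    and "\<And>k m. k \<in> S \<Longrightarrow> m \<in> S \<Longrightarrow> l k \<le> l m \<Longrightarrow> q m \<le> q k"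
  shows "(\<Sum>k\<in>S. l k * q k * w k) * (\<Sum>k\<in>S. w k)
         \<le> (\<Sum>k\<in>S. l k * w k) * (\<Sum>k\<in>S. q k * w k)"
proof -
  have neg: "(l k - l m) * (q k - q m) \<le> 0" if "k \<in> S" "m \<in> S" for k m
  proof (cases "l k \<le> l m")
    case True
    then show ?thesis using assms(3)[OF that True] by (simp add: mult_nonpos_nonneg)
  next
    case False
    then have "l m \<le> l k" by simp
    then show ?thesis using assms(3)[OF that(2,1)] False by (simp add: mult_nonneg_nonpos)
  qed
  have "(\<Sum>k\<in>S. \<Sum>m\<in>S. w k * w m * ((l k - l m) * (q k - q m))) \<le> 0"
    by (rule sum_nonpos, rule sum_nonpos, rule mult_nonneg_nonpos)
       (auto intro: neg assms(2) mult_nonneg_nonneg)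
  moreover have "(\<Sum>k\<in>S. \<Sum>m\<in>S. w k * w m * ((l k - l m) * (q k - q m)))
      = 2 * ((\<Sum>k\<in>S. l k * q k * w k) * (\<Sum>k\<in>S. w k))
        - 2 * ((\<Sum>k\<in>S. l k * w k) * (\<Sum>k\<in>S. q k * w k))"
  proof -
    have e: "w k * w m * ((l k - l m) * (q k - q m)) =
       (l k * q k * w k) * w m + (l m * q m * w m) * w k - (l k * w k) * (q m * w m)
       - (l m * w m) * (q k * w k)" for k m by (simp add: algebra_simps)
    have s2: "(\<Sum>k\<in>S. \<Sum>m\<in>S. (l m * q m * w m) * w k) = (\<Sum>k\<in>S. \<Sum>m\<in>S. (l k * q k * w k) * w m)"
      by (rule sum.swap)
    have s4: "(\<Sum>k\<in>S. \<Sum>m\<in>S. (l m * w m) * (q k * w k)) = (\<Sum>k\<in>S. \<Sum>m\<in>S. (l k * w k) * (q m * w m))"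
      by (rule sum.swap)
    show ?thesis
      unfolding e sum_subtractf sum.distrib s2 s4
      by (simp add: sum_product)
  qed
  ultimately show ?thesis by simp
qed

theorem theorem1:
  fixes A U :: "real^'n::finite^'n"
    and lam :: "'n \<Rightarrow> real"
    and p :: "real \<Rightarrow> real"
    and f :: "real^'n"
  assumes sym: "transpose A = A"
    and nonneg: "\<And>i j. A $ i $ j \<ge> 0"
    and deg_pos: "\<And>i. degree A i > 0"
    and orth: "orthogonal_matrix U"
    and eig: "sym_laplacian A = U ** diag_mat lam ** matrix_inv U"
    and p_noninc: "\<And>x y. x \<in> range lam \<Longrightarrow> y \<in> range lam \<Longrightarrow> x \<le> y \<Longrightarrow> p y \<le> p x"
    and p_nonneg: "\<And>x. x \<in> range lam \<Longrightarrow> p x \<ge> 0"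
    and f_nz: "f \<noteq> 0"
    and fbar_nz: "(U ** diag_mat (p \<circ> lam) ** matrix_inv U) *v f \<noteq> 0"
  shows "Omega A ((1 / norm ((U ** diag_mat (p \<circ> lam) ** matrix_inv U) *v f))
                    *\<^sub>R ((U ** diag_mat (p \<circ> lam) ** matrix_inv U) *v f))
         \<le> Omega A ((1 / norm f) *\<^sub>R f)"
proof -
  let ?L = "sym_laplacian A"
  let ?G = "U ** diag_mat (p \<circ> lam) ** matrix_inv U"
  have inv: "matrix_inv U = transpose U" by (rule orth_inv[OF orth])
  have UUt: "U ** transpose U = mat 1" and UtU: "transpose U ** U = mat 1"
    using orth by (auto simp: orthogonal_matrix_def)
  define c where "c = transpose U *v f"
  have fc: "f = U *v c" by (simp only: c_def matrix_vector_mul_assoc UUt matrix_vector_mul_lid)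
  define c' where "c' = diag_mat (p \<circ> lam) *v c"
  have c'k: "c' $ k = p (lam k) * c $ k" for k
  proof -
    have h: "\<And>P x y. (if P then x else (0::real)) * y = (if P then x * y else 0)" by simp
    show ?thesis by (simp add: c'_def diag_mat_def matrix_vector_mult_def h)
  qed
  have Gf: "?G *v f = U *v c'"
    unfolding inv c'_def by (subst fc, rule conj_mv[OF orth])
  have Q: "(U *v y) \<bullet> (?L *v (U *v y)) = (\<Sum>k\<in>UNIV. lam k * (y $ k)^2)" for y
  proof -
    have "?L *v (U *v y) = U *v (diag_mat lam *v y)"
      unfolding eig inv by (rule conj_mv[OF orth])
    then show ?thesis by (simp add: orth_inner[OF orth] diag_quad)
  qed
  have N: "(norm (U *v y))^2 = (\<Sum>k\<in>UNIV. (y $ k)^2)" for y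
  proof -
    have "(norm (U *v y))^2 = (U *v y) \<bullet> (U *v y)" by (rule power2_norm_eq_inner)
    also have "\<dots> = y \<bullet> y" by (rule orth_inner[OF orth])
    finally show ?thesis by (simp add: inner_vec_def power2_eq_square)
  qed
  have Om: "Omega A (s *\<^sub>R (U *v y)) = s^2 * (\<Sum>k\<in>UNIV. lam k * (y $ k)^2)" for s y
    using Q[of y] by (simp add: omega_quad[OF sym deg_pos] matrix_vector_mult_scaleR
        power2_eq_square)
  define w where "w k = (c $ k)^2" for k
  define q where "q k = (p (lam k))^2" for k
  have Nf: "(norm f)^2 = (\<Sum>k\<in>UNIV. w k)" by (simp add: fc N w_def)
  have Nfb: "(norm (?G *v f))^2 = (\<Sum>k\<in>UNIV. q k * w k)"
    by (simp add: Gf N c'k w_def q_def power_mult_distrib)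
  have pos1: "(\<Sum>k\<in>UNIV. w k) > 0" using f_nz Nf by (metis zero_less_norm_iff zero_less_power)
  have pos2: "(\<Sum>k\<in>UNIV. q k * w k) > 0" using fbar_nz Nfb by (metis zero_less_norm_iff zero_less_power)
  have LHS: "Omega A ((1 / norm (?G *v f)) *\<^sub>R (?G *v f))
      = (\<Sum>k\<in>UNIV. lam k * q k * w k) / (\<Sum>k\<in>UNIV. q k * w k)"
    unfolding Gf Om
    by (simp add: Gf[symmetric] Nfb power_divide c'k q_def w_def power_mult_distrib mult.assoc)
  have RHS: "Omega A ((1 / norm f) *\<^sub>R f)
      = (\<Sum>k\<in>UNIV. lam k * w k) / (\<Sum>k\<in>UNIV. w k)"
    unfolding fc Om
    by (simp add: fc[symmetric] Nf power_divide w_def)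
  have qmono: "q m \<le> q k" if "lam k \<le> lam m" for k m
  proof -
    have "p (lam m) \<le> p (lam k)" by (rule p_noninc) (use that in auto)
    moreover have "0 \<le> p (lam m)" by (rule p_nonneg) auto
    ultimately show ?thesis unfolding q_def by (simp add: power_mono)
  qed
  have C: "(\<Sum>k\<in>UNIV. lam k * q k * w k) * (\<Sum>k\<in>UNIV. w k)
         \<le> (\<Sum>k\<in>UNIV. lam k * w k) * (\<Sum>k\<in>UNIV. q k * w k)"
    by (rule cheb) (auto simp: w_def intro: qmono)
  show ?thesis unfolding LHS RHS using C pos1 pos2
    by (simp add: divide_le_eq le_divide_eq mult.commute mult.left_commute)
qed

end
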